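(* Let $T$ be a linear operator in $H$ and $V\subset\operatorname{dom}(T)$ a finite-dimensional subspace. Then for given $\lambda\in W_{e1}(T)$ and $\varepsilon>0$ there exist $x\in V^\perp\cap\operatorname{dom}(T)$ with $\|x\|=1$ and $\mu\in\mathbb C$ with $|\mu-\lambda|<\varepsilon$ such that \[ T_{V_x}=\begin{pmatrix}T_V&A\\0&\mu I\end{pmatrix}\quad\text{in } V_x:=V\oplus\operatorname{span}\{x\} \] for some linear operator $A:\operatorname{span}\{x\}\to V$; consequently $\sigma(T_{V_x})=\sigma(T_V)\cup\{\mu\}$. Moreover, one can choose $A=0$ if $\overline{\operatorname{dom}(T)}=H$ and $\operatorname{dom}(T)\subset\operatorname{dom}(T^* )$, and one can choose $\mu=\lambda$ if $\lambda\in\operatorname{int}W_{e1}(T)$.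
   Context: $H$ is a separable infinite-dimensional complex Hilbert space. $W(S)=\{\langle Sx,x\rangle:x\in\operatorname{dom}(S),\|x\|=1\}$. $W_{e1}(T):=\bigcap_{U}\overline{W(T|_{U^\perp\cap\operatorname{dom}(T)})}$, the intersection over all finite-dimensional subspaces $U\subset H$, where $T|_M$ denotes restriction to $M$. For a closed subspace $W\subset\operatorname{dom}(T)$, $P_W$ is the orthogonal projection onto $W$ and $T_W:=P_WT|_W$ is the compression of $T$ to $W$. *)

theory Defs
  imports "HOL-Analysis.Analysis"
begin

text \<open>Model of the separable infinite-dimensional complex Hilbert space H:
  the sequence space l2(N; C). Vectors are functions nat => complex.\<close>

type_synonym vec = "nat \<Rightarrow> complex"

definition l2 :: "vec set" where
  "l2 = {x. summable (\<lambda>n. (cmod (x n))\<^sup>2)}"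

definition vadd :: "vec \<Rightarrow> vec \<Rightarrow> vec" where
  "vadd x y = (\<lambda>n. x n + y n)"

definition vsub :: "vec \<Rightarrow> vec \<Rightarrow> vec" where
  "vsub x y = (\<lambda>n. x n - y n)"

definition vscale :: "complex \<Rightarrow> vec \<Rightarrow> vec" where
  "vscale c x = (\<lambda>n. c * x n)"

definition vzero :: vec where
  "vzero = (\<lambda>n. 0)"

definition l2inner :: "vec \<Rightarrow> vec \<Rightarrow> complex" where
  "l2inner x y = (\<Sum>n. x n * cnj (y n))"

definition l2norm :: "vec \<Rightarrow> real" where
  "l2norm x = sqrt (\<Sum>n. (cmod (x n))\<^sup>2)"

definition lin_subspace :: "vec set \<Rightarrow> bool" where
  "lin_subspace S \<longleftrightarrow> S \<subseteq> l2 \<and> vzero \<in> S \<and>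
     (\<forall>x\<in>S. \<forall>y\<in>S. vadd x y \<in> S) \<and> (\<forall>c. \<forall>x\<in>S. vscale c x \<in> S)"

definition fspan :: "vec set \<Rightarrow> vec set" where
  "fspan B = {(\<lambda>n. \<Sum>b\<in>B. c b * b n) | c. True}"

definition fin_dim_subspace :: "vec set \<Rightarrow> bool" where
  "fin_dim_subspace U \<longleftrightarrow> (\<exists>B. finite B \<and> B \<subseteq> l2 \<and> U = fspan B)"

text \<open>A linear operator in H with domain D: D a linear subspace, T linear on D
  with values in H (values of T outside D are irrelevant).\<close>
definition lin_op :: "vec set \<Rightarrow> (vec \<Rightarrow> vec) \<Rightarrow> bool" where
  "lin_op D T \<longleftrightarrow> lin_subspace D \<and> (\<forall>x\<in>D. T x \<in> l2) \<and>
     (\<forall>x\<in>D. \<forall>y\<in>D. T (vadd x y) = vadd (T x) (T y)) \<and>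
     (\<forall>c. \<forall>x\<in>D. T (vscale c x) = vscale c (T x))"

definition orth :: "vec set \<Rightarrow> vec set" where
  "orth U = {x\<in>l2. \<forall>u\<in>U. l2inner x u = 0}"

definition numrange :: "(vec \<Rightarrow> vec) \<Rightarrow> vec set \<Rightarrow> complex set" where
  "numrange T M = {l2inner (T x) x | x. x \<in> M \<and> l2norm x = 1}"

definition We1 :: "vec set \<Rightarrow> (vec \<Rightarrow> vec) \<Rightarrow> complex set" where
  "We1 D T = \<Inter> {closure (numrange T (orth U \<inter> D)) | U. fin_dim_subspace U}"

definition proj :: "vec set \<Rightarrow> vec \<Rightarrow> vec" where
  "proj W y = (THE w. w \<in> W \<and> (\<forall>u\<in>W. l2inner (vsub y w) u = 0))"

definition compress :: "(vec \<Rightarrow> vec) \<Rightarrow> vec set \<Rightarrow> vec \<Rightarrow> vec" where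
  "compress T W v = proj W (T v)"

definition fd_spectrum :: "vec set \<Rightarrow> (vec \<Rightarrow> vec) \<Rightarrow> complex set" where
  "fd_spectrum W S = {l. \<not> bij_betw (\<lambda>v. vsub (S v) (vscale l v)) W W}"

definition ext_span :: "vec set \<Rightarrow> vec \<Rightarrow> vec set" where
  "ext_span V x = {vadd v (vscale c x) | v c. v \<in> V}"

definition dense_in_H :: "vec set \<Rightarrow> bool" where
  "dense_in_H D \<longleftrightarrow> (\<forall>y\<in>l2. \<forall>e>0. \<exists>x\<in>D. l2norm (vsub x y) < e)"

definition adj_dom :: "vec set \<Rightarrow> (vec \<Rightarrow> vec) \<Rightarrow> vec set" where
  "adj_dom D T = {y\<in>l2. \<exists>z\<in>l2. \<forall>x\<in>D. l2inner (T x) y = l2inner x z}"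

text \<open>The block form  T_{V_x} = [[T_V, A],[0, mu I]]  in V_x = V (+) span{x},
  with A : span{x} -> V linear.\<close>
definition block_form :: "(vec \<Rightarrow> vec) \<Rightarrow> vec set \<Rightarrow> vec \<Rightarrow> complex \<Rightarrow> (vec \<Rightarrow> vec) \<Rightarrow> bool" where
  "block_form T V x \<mu> A \<longleftrightarrow>
     (\<forall>y\<in>fspan {x}. A y \<in> V) \<and>
     (\<forall>y\<in>fspan {x}. \<forall>z\<in>fspan {x}. A (vadd y z) = vadd (A y) (A z)) \<and>
     (\<forall>c. \<forall>y\<in>fspan {x}. A (vscale c y) = vscale c (A y)) \<and>
     (\<forall>v\<in>V. \<forall>y\<in>fspan {x}.
        compress T (ext_span V x) (vadd v y) = vadd (vadd (compress T V v) (A y)) (vscale \<mu> y))"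

end

theory Submission imports Defs begin

lemma l2_vscale: "x \<in> l2 \<Longrightarrow> vscale c x \<in> l2"
proof -
  assume "x \<in> l2"
  hence "summable (\<lambda>n. (cmod c)\<^sup>2 * (cmod (x n))\<^sup>2)" unfolding l2_def by (auto intro: summable_mult)
  thus ?thesis unfolding l2_def vscale_def by (simp add: norm_mult power_mult_distrib)
qed

lemma real_sq_sum_le: "((u::real) + v)\<^sup>2 \<le> 2 * u\<^sup>2 + 2 * v\<^sup>2"
proof -
  have "0 \<le> (u - v)\<^sup>2" by simp
  thus ?thesis by (simp add: power2_eq_square algebra_simps)
qed
lemma real_prod_le: "(u::real) * v \<le> u\<^sup>2 + v\<^sup>2"
proof -
  have "0 \<le> (u - v)\<^sup>2" by simp
  hence "2 * (u * v) \<le> u\<^sup>2 + v\<^sup>2" by (simp add: power2_eq_square algebra_simps)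
  moreover have "0 \<le> u\<^sup>2" "0 \<le> v\<^sup>2" by simp_all
  ultimately show ?thesis by linarith
qed
lemma sq_add_le: "(cmod (a + b))\<^sup>2 \<le> 2 * (cmod a)\<^sup>2 + 2 * (cmod b)\<^sup>2"
proof -
  have "cmod (a+b) \<le> cmod a + cmod b" by (rule norm_triangle_ineq)
  hence "(cmod (a+b))\<^sup>2 \<le> (cmod a + cmod b)\<^sup>2" by (simp add: power_mono)
  also have "\<dots> \<le> 2 * (cmod a)\<^sup>2 + 2 * (cmod b)\<^sup>2" by (rule real_sq_sum_le)
  finally show ?thesis .
qed
lemma l2_vadd: "x \<in> l2 \<Longrightarrow> y \<in> l2 \<Longrightarrow> vadd x y \<in> l2"
proof -
  assume a: "x \<in> l2" "y \<in> l2"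
  hence s: "summable (\<lambda>n. 2 * (cmod (x n))\<^sup>2 + 2 * (cmod (y n))\<^sup>2)" unfolding l2_def
    by (intro summable_add summable_mult) auto
  show ?thesis unfolding l2_def vadd_def
    by (simp, rule summable_comparison_test'[OF s, of 0]) (simp add: sq_add_le)
qed

lemma vsub_eq: "vsub x y = vadd x (vscale (-1) y)"
  by (simp add: vsub_def vadd_def vscale_def)

lemma l2_vsub: "x \<in> l2 \<Longrightarrow> y \<in> l2 \<Longrightarrow> vsub x y \<in> l2"
  by (simp add: vsub_eq l2_vadd l2_vscale)

lemma l2_vzero: "vzero \<in> l2"
  by (simp add: l2_def vzero_def)

lemma inner_summable:
  assumes "x \<in> l2" "y \<in> l2" shows "summable (\<lambda>n. x n * cnj (y n))"
proof -
  have s: "summable (\<lambda>n. (cmod (x n))\<^sup>2 + (cmod (y n))\<^sup>2)" using assms unfolding l2_def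
    by (intro summable_add) auto
  show ?thesis
  proof (rule summable_comparison_test'[OF s, of 0])
    fix n
    have "cmod (x n) * cmod (y n) \<le> (cmod (x n))\<^sup>2 + (cmod (y n))\<^sup>2"
      by (rule real_prod_le)
    thus "norm (x n * cnj (y n)) \<le> (cmod (x n))\<^sup>2 + (cmod (y n))\<^sup>2" by (simp add: norm_mult)
  qed
qed

lemma ip_add_left: "x \<in> l2 \<Longrightarrow> y \<in> l2 \<Longrightarrow> z \<in> l2 \<Longrightarrow>
   l2inner (vadd x y) z = l2inner x z + l2inner y z"
proof -
  assume a: "x \<in> l2" "y \<in> l2" "z \<in> l2"
  have "(\<lambda>n. x n * cnj (z n)) sums l2inner x z" "(\<lambda>n. y n * cnj (z n)) sums l2inner y z"
    unfolding l2inner_def using inner_summable a by (auto intro!: summable_sums)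
  hence "(\<lambda>n. x n * cnj (z n) + y n * cnj (z n)) sums (l2inner x z + l2inner y z)"
    by (rule sums_add)
  hence "(\<lambda>n. vadd x y n * cnj (z n)) sums (l2inner x z + l2inner y z)"
    unfolding vadd_def by (simp add: distrib_right)
  thus ?thesis unfolding l2inner_def by (simp add: sums_iff)
qed

lemma ip_scale_left: "x \<in> l2 \<Longrightarrow> z \<in> l2 \<Longrightarrow> l2inner (vscale c x) z = c * l2inner x z"
proof -
  assume a: "x \<in> l2" "z \<in> l2"
  have "(\<lambda>n. x n * cnj (z n)) sums l2inner x z"
    unfolding l2inner_def using inner_summable a by (auto intro!: summable_sums)
  hence "(\<lambda>n. c * (x n * cnj (z n))) sums (c * l2inner x z)"
    by (rule sums_mult)
  hence "(\<lambda>n. vscale c x n * cnj (z n)) sums (c * l2inner x z)"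
    unfolding vscale_def by (simp add: mult.assoc)
  thus ?thesis unfolding l2inner_def by (simp add: sums_iff)
qed

lemma ip_cnj: "x \<in> l2 \<Longrightarrow> y \<in> l2 \<Longrightarrow> l2inner y x = cnj (l2inner x y)"
proof -
  assume a: "x \<in> l2" "y \<in> l2"
  have "(\<lambda>n. x n * cnj (y n)) sums l2inner x y" unfolding l2inner_def using inner_summable[OF a]
    by (simp add: summable_sums)
  hence "(\<lambda>n. cnj (x n * cnj (y n))) sums cnj (l2inner x y)" by (simp only: sums_cnj)
  hence "(\<lambda>n. y n * cnj (x n)) sums cnj (l2inner x y)" by (simp add: mult.commute)
  thus ?thesis unfolding l2inner_def by (simp add: sums_iff)
qed

lemma ip_add_right: "x \<in> l2 \<Longrightarrow> y \<in> l2 \<Longrightarrow> z \<in> l2 \<Longrightarrow>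
   l2inner z (vadd x y) = l2inner z x + l2inner z y"
proof -
  assume a: "x \<in> l2" "y \<in> l2" "z \<in> l2"
  have "l2inner z (vadd x y) = cnj (l2inner (vadd x y) z)" using a by (intro ip_cnj l2_vadd)
  also have "\<dots> = cnj (l2inner x z) + cnj (l2inner y z)" using a by (simp add: ip_add_left)
  also have "\<dots> = l2inner z x + l2inner z y" using a by (simp add: ip_cnj[of z])
  finally show ?thesis .
qed

lemma ip_scale_right: "x \<in> l2 \<Longrightarrow> z \<in> l2 \<Longrightarrow> l2inner z (vscale c x) = cnj c * l2inner z x"
proof -
  assume a: "x \<in> l2" "z \<in> l2"
  have "l2inner z (vscale c x) = cnj (l2inner (vscale c x) z)" using a by (intro ip_cnj l2_vscale)
  also have "\<dots> = cnj c * cnj (l2inner x z)" using a by (simp add: ip_scale_left)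
  also have "\<dots> = cnj c * l2inner z x" using a by (simp add: ip_cnj[of z])
  finally show ?thesis .
qed

lemma ip_sub_left: "x \<in> l2 \<Longrightarrow> y \<in> l2 \<Longrightarrow> z \<in> l2 \<Longrightarrow>
   l2inner (vsub x y) z = l2inner x z - l2inner y z"
  by (simp add: vsub_eq ip_add_left ip_scale_left l2_vscale)

lemma ip_sub_right: "x \<in> l2 \<Longrightarrow> y \<in> l2 \<Longrightarrow> z \<in> l2 \<Longrightarrow>
   l2inner z (vsub x y) = l2inner z x - l2inner z y"
  by (simp add: vsub_eq ip_add_right ip_scale_right l2_vscale)

lemma ip_zero_left: "l2inner vzero z = 0"
  by (simp add: l2inner_def vzero_def)

lemma ip_zero_right: "l2inner z vzero = 0"
  by (simp add: l2inner_def vzero_def)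

lemma ip_self: "x \<in> l2 \<Longrightarrow> l2inner x x = of_real (\<Sum>n. (cmod (x n))\<^sup>2)"
proof -
  assume "x \<in> l2"
  hence "(\<lambda>n. (cmod (x n))\<^sup>2) sums (\<Sum>n. (cmod (x n))\<^sup>2)" unfolding l2_def by (simp add: summable_sums)
  hence "(\<lambda>n. complex_of_real ((cmod (x n))\<^sup>2)) sums of_real (\<Sum>n. (cmod (x n))\<^sup>2)"
    by (rule sums_of_real)
  hence "(\<lambda>n. x n * cnj (x n)) sums of_real (\<Sum>n. (cmod (x n))\<^sup>2)"
    by (simp only: complex_norm_square)
  thus ?thesis unfolding l2inner_def by (simp add: sums_iff)
qed

lemma ip_self_norm: "x \<in> l2 \<Longrightarrow> l2inner x x = of_real ((l2norm x)\<^sup>2)"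
proof -
  assume a: "x \<in> l2"
  have "(\<Sum>n. (cmod (x n))\<^sup>2) \<ge> 0" using a unfolding l2_def by (intro suminf_nonneg) auto
  thus ?thesis using ip_self[OF a] unfolding l2norm_def by simp
qed

lemma ip_self_zero: "x \<in> l2 \<Longrightarrow> l2inner x x = 0 \<Longrightarrow> x = vzero"
proof -
  assume a: "x \<in> l2" "l2inner x x = 0"
  hence "(\<Sum>n. (cmod (x n))\<^sup>2) = 0" using ip_self by simp
  hence "\<forall>n. (cmod (x n))\<^sup>2 = 0" using a(1) unfolding l2_def by (subst (asm) suminf_eq_zero_iff) auto
  thus ?thesis unfolding vzero_def by auto
qed

lemma ip_unit: "x \<in> l2 \<Longrightarrow> l2norm x = 1 \<Longrightarrow> l2inner x x = 1"
  by (simp add: ip_self_norm)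


lemmas vec_defs = vadd_def vsub_def vscale_def vzero_def

lemma fspan_empty: "fspan {} = {vzero}"
  by (simp add: fspan_def vzero_def)

lemma fspan_insert:
  assumes "finite B" "b \<notin> B"
  shows "fspan (insert b B) = {vadd u (vscale t b) | u t. u \<in> fspan B}"
proof (intro set_eqI iffI)
  fix v assume "v \<in> fspan (insert b B)"
  then obtain c where v: "v = (\<lambda>n. \<Sum>b'\<in>insert b B. c b' * b' n)" by (auto simp: fspan_def)
  have "v = vadd (\<lambda>n. \<Sum>b'\<in>B. c b' * b' n) (vscale (c b) b)"
    using assms by (simp add: v vec_defs fun_eq_iff)
  moreover have "(\<lambda>n. \<Sum>b'\<in>B. c b' * b' n) \<in> fspan B" by (auto simp: fspan_def)
  ultimately show "v \<in> {vadd u (vscale t b) | u t. u \<in> fspan B}" by blast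
next
  fix v assume "v \<in> {vadd u (vscale t b) | u t. u \<in> fspan B}"
  then obtain u t c where v: "v = vadd u (vscale t b)" and u: "u = (\<lambda>n. \<Sum>b'\<in>B. c b' * b' n)"
    by (auto simp: fspan_def)
  have "(\<Sum>b'\<in>B. (c(b := t)) b' * b' n) = (\<Sum>b'\<in>B. c b' * b' n)" for n
    using assms(2) by (intro sum.cong) auto
  hence "v = (\<lambda>n. \<Sum>b'\<in>insert b B. (c(b := t)) b' * b' n)"
    using assms by (simp add: v u vec_defs fun_eq_iff)
  thus "v \<in> fspan (insert b B)" by (auto simp: fspan_def)
qed

lemma fspan_memI: "v = (\<lambda>n. \<Sum>b\<in>B. c b * b n) \<Longrightarrow> v \<in> fspan B"
  unfolding fspan_def by blast

definition closed_sub :: "vec set \<Rightarrow> bool" where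
  "closed_sub S \<longleftrightarrow> vzero \<in> S \<and> (\<forall>x\<in>S. \<forall>y\<in>S. vadd x y \<in> S) \<and> (\<forall>c. \<forall>x\<in>S. vscale c x \<in> S)"

lemma fspan_least:
  assumes "finite B" "closed_sub S" "B \<subseteq> S"
  shows "fspan B \<subseteq> S"
  using assms(1,3)
proof (induction B rule: finite_induct)
  case empty thus ?case using assms(2) by (simp add: fspan_empty closed_sub_def)
next
  case (insert b B)
  thus ?case using assms(2) unfolding closed_sub_def by (auto simp: fspan_insert)
qed

lemma closed_sub_l2: "closed_sub l2"
  by (simp add: closed_sub_def l2_vzero l2_vadd l2_vscale)

lemma lin_subspace_closed_sub: "lin_subspace S \<Longrightarrow> closed_sub S"
  by (simp add: lin_subspace_def closed_sub_def)

lemma fspan_base: "finite B \<Longrightarrow> b \<in> B \<Longrightarrow> b \<in> fspan B"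
proof -
  assume a: "finite B" "b \<in> B"
  have "(\<Sum>b'\<in>B. (if b' = b then 1 else 0) * b' n) = b n" for n
  proof -
    have "(\<Sum>b'\<in>B. (if b' = b then 1 else 0) * b' n) = (\<Sum>b'\<in>B. if b' = b then b' n else 0)"
      by (intro sum.cong) auto
    also have "\<dots> = b n" using a by simp
    finally show ?thesis .
  qed
  hence "b = (\<lambda>n. \<Sum>b'\<in>B. (if b' = b then 1 else 0) * b' n)" by (simp add: fun_eq_iff)
  thus ?thesis by (rule fspan_memI)
qed

lemma closed_sub_fspan: "closed_sub (fspan B)"
  unfolding closed_sub_def
proof (intro conjI ballI allI)
  show "vzero \<in> fspan B" unfolding fspan_def vzero_def
    by (rule CollectI, rule exI[of _ "\<lambda>_. 0"]) simp
next
  fix x y assume "x \<in> fspan B" "y \<in> fspan B"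
  then obtain c d where "x = (\<lambda>n. \<Sum>b\<in>B. c b * b n)" "y = (\<lambda>n. \<Sum>b\<in>B. d b * b n)"
    by (auto simp: fspan_def)
  hence "vadd x y = (\<lambda>n. \<Sum>b\<in>B. (\<lambda>b. c b + d b) b * b n)"
    by (simp add: vadd_def sum.distrib distrib_right)
  thus "vadd x y \<in> fspan B" by (rule fspan_memI)
next
  fix k x assume "x \<in> fspan B"
  then obtain c where "x = (\<lambda>n. \<Sum>b\<in>B. c b * b n)" by (auto simp: fspan_def)
  hence "vscale k x = (\<lambda>n. \<Sum>b\<in>B. (\<lambda>b. k * c b) b * b n)"
    by (simp add: vscale_def sum_distrib_left mult.assoc)
  thus "vscale k x \<in> fspan B" by (rule fspan_memI)
qed

lemma fspan_l2: "finite B \<Longrightarrow> B \<subseteq> l2 \<Longrightarrow> fspan B \<subseteq> l2"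
  using fspan_least closed_sub_l2 by blast

lemma fspan_mono: "finite B' \<Longrightarrow> B \<subseteq> B' \<Longrightarrow> fspan B \<subseteq> fspan B'"
  by (meson closed_sub_fspan fspan_base fspan_least finite_subset subset_eq)

lemma closed_sub_vsub: "closed_sub S \<Longrightarrow> x \<in> S \<Longrightarrow> y \<in> S \<Longrightarrow> vsub x y \<in> S"
  by (simp add: closed_sub_def vsub_eq)

lemma fspan_single: "fspan {x} = {vscale c x | c. True}"
  by (auto simp: fspan_def vscale_def)

lemma proj_unique:
  assumes S: "closed_sub W" "W \<subseteq> l2" and y: "y \<in> l2" and w: "w \<in> W"
    and orthw: "\<forall>u\<in>W. l2inner (vsub y w) u = 0"
  shows "proj W y = w"
  unfolding proj_def
proof (rule the1_equality)
  show "w \<in> W \<and> (\<forall>u\<in>W. l2inner (vsub y w) u = 0)" using w orthw by simp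
  show "\<exists>!w. w \<in> W \<and> (\<forall>u\<in>W. l2inner (vsub y w) u = 0)"
  proof (rule ex1I[of _ w])
    show "w \<in> W \<and> (\<forall>u\<in>W. l2inner (vsub y w) u = 0)" using w orthw by simp
  next
    fix w' assume w': "w' \<in> W \<and> (\<forall>u\<in>W. l2inner (vsub y w') u = 0)"
    have d: "vsub w' w \<in> W" using S(1) w w' closed_sub_vsub by blast
    have l: "w \<in> l2" "w' \<in> l2" using S w w' by auto
    have eq: "vsub w' w = vsub (vsub y w) (vsub y w')" by (simp add: vec_defs fun_eq_iff)
    have "l2inner (vsub w' w) (vsub w' w) = l2inner (vsub y w) (vsub w' w) - l2inner (vsub y w') (vsub w' w)"
      by (subst (1) eq) (simp add: ip_sub_left l2_vsub y l d)
    also have "\<dots> = 0" using w' orthw d by simp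
    finally have "vsub w' w = vzero" using ip_self_zero d S(2) by blast
    thus "w' = w" by (simp add: vec_defs fun_eq_iff)
  qed
qed

definition has_proj :: "vec set \<Rightarrow> bool" where
  "has_proj W \<longleftrightarrow> closed_sub W \<and> W \<subseteq> l2 \<and> (\<forall>y\<in>l2. \<exists>w\<in>W. \<forall>u\<in>W. l2inner (vsub y w) u = 0)"

lemma proj_props:
  assumes "has_proj W" "y \<in> l2"
  shows "proj W y \<in> W" "\<forall>u\<in>W. l2inner (vsub y (proj W y)) u = 0"
proof -
  obtain w where "w \<in> W" "\<forall>u\<in>W. l2inner (vsub y w) u = 0" using assms unfolding has_proj_def by blast
  moreover have "proj W y = w" using assms calculation unfolding has_proj_def by (intro proj_unique) auto
  ultimately show "proj W y \<in> W" "\<forall>u\<in>W. l2inner (vsub y (proj W y)) u = 0" by auto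
qed

lemma proj_add:
  assumes W: "has_proj W" and y: "y \<in> l2" and z: "z \<in> l2"
  shows "proj W (vadd y z) = vadd (proj W y) (proj W z)"
proof (rule proj_unique)
  show "closed_sub W" "W \<subseteq> l2" using W by (auto simp: has_proj_def)
  show "vadd y z \<in> l2" using y z by (rule l2_vadd)
  have p: "proj W y \<in> W" "proj W z \<in> W" using proj_props W y z by auto
  thus "vadd (proj W y) (proj W z) \<in> W" using W by (auto simp: has_proj_def closed_sub_def)
  have pl: "proj W y \<in> l2" "proj W z \<in> l2" using p W by (auto simp: has_proj_def)
  show "\<forall>u\<in>W. l2inner (vsub (vadd y z) (vadd (proj W y) (proj W z))) u = 0"
  proof
    fix u assume u: "u \<in> W"
    hence ul: "u \<in> l2" using W by (auto simp: has_proj_def)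
    have eq: "vsub (vadd y z) (vadd (proj W y) (proj W z)) = vadd (vsub y (proj W y)) (vsub z (proj W z))"
      by (simp add: vec_defs fun_eq_iff)
    show "l2inner (vsub (vadd y z) (vadd (proj W y) (proj W z))) u = 0"
      unfolding eq using proj_props[OF W y] proj_props[OF W z] u
      by (simp add: ip_add_left l2_vsub y z pl ul)
  qed
qed

lemma proj_scale:
  assumes W: "has_proj W" and y: "y \<in> l2"
  shows "proj W (vscale c y) = vscale c (proj W y)"
proof (rule proj_unique)
  show "closed_sub W" "W \<subseteq> l2" using W by (auto simp: has_proj_def)
  show "vscale c y \<in> l2" using y by (rule l2_vscale)
  have p: "proj W y \<in> W" using proj_props W y by auto
  thus "vscale c (proj W y) \<in> W" using W by (auto simp: has_proj_def closed_sub_def)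
  have pl: "proj W y \<in> l2" using p W by (auto simp: has_proj_def)
  show "\<forall>u\<in>W. l2inner (vsub (vscale c y) (vscale c (proj W y))) u = 0"
  proof
    fix u assume u: "u \<in> W"
    hence ul: "u \<in> l2" using W by (auto simp: has_proj_def)
    have eq: "vsub (vscale c y) (vscale c (proj W y)) = vscale c (vsub y (proj W y))"
      by (simp add: vec_defs fun_eq_iff algebra_simps)
    show "l2inner (vsub (vscale c y) (vscale c (proj W y))) u = 0"
      unfolding eq using proj_props[OF W y] u
      by (simp add: ip_scale_left l2_vsub y pl ul)
  qed
qed

lemma proj_exists:
  assumes "finite B" "B \<subseteq> l2"
  shows "\<forall>y\<in>l2. \<exists>w\<in>fspan B. \<forall>u\<in>fspan B. l2inner (vsub y w) u = 0"
  using assms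
proof (induction B rule: finite_induct)
  case empty
  show ?case by (simp add: fspan_empty ip_zero_right)
next
  case (insert b B)
  have bl: "b \<in> l2" and Bl: "B \<subseteq> l2" using insert.prems by auto
  have FB: "fspan B \<subseteq> l2" using fspan_l2 insert.hyps(1) Bl by blast
  have IH: "\<forall>y\<in>l2. \<exists>w\<in>fspan B. \<forall>u\<in>fspan B. l2inner (vsub y w) u = 0" using insert.IH Bl by blast
  obtain p where p: "p \<in> fspan B" "\<forall>u\<in>fspan B. l2inner (vsub b p) u = 0" using IH bl by blast
  have pl: "p \<in> l2" using p FB by blast
  define b' where "b' = vsub b p"
  have b'l: "b' \<in> l2" unfolding b'_def using bl pl by (rule l2_vsub)
  show ?case
  proof
    fix y assume yl: "y \<in> l2"
    obtain w0 where w0: "w0 \<in> fspan B" "\<forall>u\<in>fspan B. l2inner (vsub y w0) u = 0" using IH yl by blast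
    have w0l: "w0 \<in> l2" using w0 FB by blast
    define k where "k = l2inner y b' / l2inner b' b'"
    define w where "w = vadd w0 (vscale k b')"
    define r where "r = vsub y w"
    have rl: "r \<in> l2" unfolding r_def w_def using yl w0l b'l by (simp add: l2_vsub l2_vadd l2_vscale)
    have r_eq: "r = vsub (vsub y w0) (vscale k b')" unfolding r_def w_def by (simp add: vec_defs fun_eq_iff)
    have u0: "l2inner r u0 = 0" if "u0 \<in> fspan B" for u0
    proof -
      have "l2inner r u0 = l2inner (vsub y w0) u0 - k * l2inner b' u0"
        unfolding r_eq using that FB yl w0l b'l by (simp add: ip_sub_left ip_scale_left l2_vsub l2_vscale subset_iff)
      thus ?thesis using w0(2) p(2) that unfolding b'_def by simp
    qed
    have rb': "l2inner r b' = 0"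
    proof -
      have "l2inner r b' = l2inner y b' - l2inner w0 b' - k * l2inner b' b'"
        unfolding r_eq using yl w0l b'l by (simp add: ip_sub_left ip_scale_left l2_vsub l2_vscale)
      moreover have "l2inner w0 b' = 0"
        using ip_cnj[OF b'l w0l] p(2) w0(1) unfolding b'_def by simp
      moreover have "l2inner y b' - k * l2inner b' b' = 0"
      proof (cases "l2inner b' b' = 0")
        case True
        hence "b' = vzero" using ip_self_zero b'l by blast
        thus ?thesis using True by (simp add: ip_zero_right)
      next
        case False thus ?thesis unfolding k_def by simp
      qed
      ultimately show ?thesis by simp
    qed
    have rb: "l2inner r b = 0"
    proof -
      have "b = vadd p b'" unfolding b'_def by (simp add: vec_defs fun_eq_iff)
      hence "l2inner r b = l2inner r p + l2inner r b'" using rl pl b'l by (simp add: ip_add_right)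
      thus ?thesis using u0[OF p(1)] rb' by simp
    qed
    have wmem: "w \<in> fspan (insert b B)"
    proof -
      have "w = vadd (vsub w0 (vscale k p)) (vscale k b)" unfolding w_def b'_def
        by (simp add: vec_defs fun_eq_iff algebra_simps)
      moreover have "vsub w0 (vscale k p) \<in> fspan B"
        using closed_sub_fspan w0(1) p(1) by (meson closed_sub_def closed_sub_vsub)
      ultimately show ?thesis using fspan_insert[OF insert.hyps] by blast
    qed
    have "\<forall>u\<in>fspan (insert b B). l2inner r u = 0"
    proof
      fix u assume "u \<in> fspan (insert b B)"
      then obtain u0 t where u: "u = vadd u0 (vscale t b)" "u0 \<in> fspan B"
        using fspan_insert[OF insert.hyps] by blast
      have "l2inner r u = l2inner r u0 + cnj t * l2inner r b"
        unfolding u using rl bl u(2) FB by (simp add: ip_add_right ip_scale_right l2_vscale subset_iff)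
      thus "l2inner r u = 0" using u0[OF u(2)] rb by simp
    qed
    thus "\<exists>w\<in>fspan (insert b B). \<forall>u\<in>fspan (insert b B). l2inner (vsub y w) u = 0"
      using wmem unfolding r_def by blast
  qed
qed

lemma has_proj_fspan: "finite B \<Longrightarrow> B \<subseteq> l2 \<Longrightarrow> has_proj (fspan B)"
  unfolding has_proj_def using closed_sub_fspan fspan_l2 proj_exists by blast

lemma fin_dim_has_proj: "fin_dim_subspace V \<Longrightarrow> has_proj V"
  unfolding fin_dim_subspace_def using has_proj_fspan by blast

lemma ext_mem: "v \<in> V \<Longrightarrow> vadd v (vscale c x) \<in> ext_span V x"
  unfolding ext_span_def by blast

lemma ext_coef:
  assumes "V \<subseteq> l2" "x \<in> l2" "\<forall>u\<in>V. l2inner x u = 0" "l2inner x x = 1" "v \<in> V"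
  shows "l2inner (vadd v (vscale c x)) x = c"
proof -
  have vl: "v \<in> l2" using assms by auto
  have "l2inner v x = 0" using ip_cnj[OF assms(2) vl] assms(3,5) by simp
  thus ?thesis using assms vl by (simp add: ip_add_left ip_scale_left l2_vscale)
qed

lemma ext_decomp:
  assumes "V \<subseteq> l2" "x \<in> l2" "\<forall>u\<in>V. l2inner x u = 0" "l2inner x x = 1" "v \<in> V" "v' \<in> V"
    and "vadd v (vscale c x) = vadd v' (vscale c' x)"
  shows "c = c' \<and> v = v'"
proof -
  have "c = c'" using ext_coef[OF assms(1-5), of c] ext_coef[OF assms(1-4,6), of c'] assms(7) by simp
  moreover from this have "v = v'" using assms(7) by (simp add: vec_defs fun_eq_iff)
  ultimately show ?thesis by simp
qed

lemma spectrum_block: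
  fixes S SV A :: "vec \<Rightarrow> vec"
  assumes cV: "closed_sub V" and Vl: "V \<subseteq> l2" and xl: "x \<in> l2"
    and xo: "\<forall>u\<in>V. l2inner x u = 0" and xx: "l2inner x x = 1"
    and SV: "\<forall>v\<in>V. SV v \<in> V" and AV: "\<forall>c. A (vscale c x) \<in> V" and A0: "A (vscale 0 x) = vzero"
    and blk: "\<forall>v\<in>V. \<forall>c. S (vadd v (vscale c x)) = vadd (vadd (SV v) (A (vscale c x))) (vscale \<mu> (vscale c x))"
  shows "fd_spectrum (ext_span V x) S = fd_spectrum V SV \<union> {\<mu>}"
proof -
  define Vx where "Vx = ext_span V x"
  have dec: "c = c' \<and> v = v'" if "v \<in> V" "v' \<in> V" "vadd v (vscale c x) = vadd v' (vscale c' x)" for v v' c c'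
    using ext_decomp[OF Vl xl xo xx that] .
  have Vsub: "vsub a b \<in> V" if "a \<in> V" "b \<in> V" for a b using closed_sub_vsub[OF cV that] .
  have Vadd: "vadd a b \<in> V" if "a \<in> V" "b \<in> V" for a b using cV that by (simp add: closed_sub_def)
  have Vscale: "vscale k a \<in> V" if "a \<in> V" for k a using cV that by (simp add: closed_sub_def)
  have z0: "vzero \<in> V" using cV by (simp add: closed_sub_def)
  have self0: "vadd v (vscale 0 x) = v" for v by (simp add: vec_defs)
  have key: "bij_betw (\<lambda>w. vsub (S w) (vscale l w)) Vx Vx \<longleftrightarrow>
        bij_betw (\<lambda>v. vsub (SV v) (vscale l v)) V V \<and> l \<noteq> \<mu>" for l
  proof -
    define L where "L = (\<lambda>w. vsub (S w) (vscale l w))"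
    define LV where "LV = (\<lambda>v. vsub (SV v) (vscale l v))"
    have LVV: "LV v \<in> V" if "v \<in> V" for v unfolding LV_def using that SV Vsub Vscale by blast
    have E: "L (vadd v (vscale c x)) = vadd (vadd (LV v) (A (vscale c x))) (vscale (c * (\<mu> - l)) x)"
      if "v \<in> V" for v c
      unfolding L_def LV_def using blk that by (simp add: vec_defs fun_eq_iff algebra_simps)
    have E0: "L v = LV v" if "v \<in> V" for v
    proof -
      have A0': "A (\<lambda>n. 0) = (\<lambda>n. 0)" using A0 by (simp add: vscale_def vzero_def)
      show ?thesis using E[OF that, of 0] by (simp add: vec_defs A0')
    qed
    have VVx: "v \<in> Vx" if "v \<in> V" for v using ext_mem[OF that, of 0 x] self0 unfolding Vx_def by simp
    have Vx_cases: "\<exists>v c. v \<in> V \<and> w = vadd v (vscale c x)" if "w \<in> Vx" for w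
      using that unfolding Vx_def ext_span_def by blast
    show ?thesis
    proof
      assume bij: "bij_betw (\<lambda>w. vsub (S w) (vscale l w)) Vx Vx"
      hence bijL: "inj_on L Vx" "L ` Vx = Vx" unfolding L_def bij_betw_def by auto
      have lm: "l \<noteq> \<mu>"
      proof
        assume "l = \<mu>"
        have "x \<in> Vx" using ext_mem[OF z0, of 1 x] unfolding Vx_def by (simp add: vec_defs)
        then obtain w where w: "w \<in> Vx" "L w = x" using bijL by (metis imageE)
        then obtain v c where vc: "v \<in> V" "w = vadd v (vscale c x)" using Vx_cases by blast
        have "x = vadd (vadd (LV v) (A (vscale c x))) (vscale 0 x)"
          using E[OF vc(1), of c] w vc \<open>l = \<mu>\<close> by simp
        hence "vadd vzero (vscale 1 x) = vadd (vadd (LV v) (A (vscale c x))) (vscale 0 x)"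
          by (simp add: vec_defs)
        hence "(1::complex) = 0" using dec[OF z0 Vadd[OF LVV[OF vc(1)] AV[rule_format]]] by blast
        thus False by simp
      qed
      have "inj_on LV V"
      proof (rule inj_onI)
        fix a b assume "a \<in> V" "b \<in> V" "LV a = LV b"
        thus "a = b" using bijL(1) E0 VVx by (metis inj_onD)
      qed
      moreover have "LV ` V = V"
      proof
        show "LV ` V \<subseteq> V" using LVV by blast
        show "V \<subseteq> LV ` V"
        proof
          fix u assume u: "u \<in> V"
          then obtain w where w: "w \<in> Vx" "L w = u" using bijL VVx by (metis imageE)
          then obtain v c where vc: "v \<in> V" "w = vadd v (vscale c x)" using Vx_cases by blast
          have "vadd (vadd (LV v) (A (vscale c x))) (vscale (c * (\<mu> - l)) x) = vadd u (vscale 0 x)"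
            using E[OF vc(1), of c] w vc by (simp add: self0)
          hence "c * (\<mu> - l) = 0" using dec[OF Vadd[OF LVV[OF vc(1)] AV[rule_format]] u] by blast
          hence "c = 0" using lm by simp
          hence "u = LV v" using E0[OF vc(1)] w vc by (simp add: self0)
          thus "u \<in> LV ` V" using vc by blast
        qed
      qed
      ultimately show "bij_betw (\<lambda>v. vsub (SV v) (vscale l v)) V V \<and> l \<noteq> \<mu>"
        using lm unfolding LV_def bij_betw_def by simp
    next
      assume "bij_betw (\<lambda>v. vsub (SV v) (vscale l v)) V V \<and> l \<noteq> \<mu>"
      hence bijV: "inj_on LV V" "LV ` V = V" and lm: "l \<noteq> \<mu>" unfolding LV_def bij_betw_def by auto
      have "inj_on L Vx"
      proof (rule inj_onI)
        fix w1 w2 assume w: "w1 \<in> Vx" "w2 \<in> Vx" "L w1 = L w2"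
        obtain v1 c1 where 1: "v1 \<in> V" "w1 = vadd v1 (vscale c1 x)" using Vx_cases w(1) by blast
        obtain v2 c2 where 2: "v2 \<in> V" "w2 = vadd v2 (vscale c2 x)" using Vx_cases w(2) by blast
        have "vadd (vadd (LV v1) (A (vscale c1 x))) (vscale (c1 * (\<mu> - l)) x)
            = vadd (vadd (LV v2) (A (vscale c2 x))) (vscale (c2 * (\<mu> - l)) x)"
          using E[OF 1(1), of c1] E[OF 2(1), of c2] w 1 2 by simp
        hence d: "c1 * (\<mu> - l) = c2 * (\<mu> - l) \<and> vadd (LV v1) (A (vscale c1 x)) = vadd (LV v2) (A (vscale c2 x))"
          using dec[OF Vadd[OF LVV[OF 1(1)] AV[rule_format]] Vadd[OF LVV[OF 2(1)] AV[rule_format]]] by blast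
        hence c: "c1 = c2" using lm by simp
        hence "LV v1 = LV v2" using d by (simp add: vec_defs fun_eq_iff)
        hence "v1 = v2" using bijV(1) 1 2 by (metis inj_onD)
        thus "w1 = w2" using 1 2 c by simp
      qed
      moreover have "L ` Vx = Vx"
      proof
        show "L ` Vx \<subseteq> Vx"
        proof
          fix y assume "y \<in> L ` Vx"
          then obtain w where w: "w \<in> Vx" "y = L w" by blast
          then obtain v c where vc: "v \<in> V" "w = vadd v (vscale c x)" using Vx_cases by blast
          show "y \<in> Vx" using E[OF vc(1), of c] w vc ext_mem[OF Vadd[OF LVV[OF vc(1)] AV[rule_format]]]
            unfolding Vx_def by simp
        qed
        show "Vx \<subseteq> L ` Vx"
        proof
          fix y assume "y \<in> Vx"
          then obtain u d where ud: "u \<in> V" "y = vadd u (vscale d x)" using Vx_cases by blast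
          define c where "c = d / (\<mu> - l)"
          have cd: "c * (\<mu> - l) = d" unfolding c_def using lm by simp
          have "vsub u (A (vscale c x)) \<in> V" using Vsub ud(1) AV by blast
          then obtain v where v: "v \<in> V" "LV v = vsub u (A (vscale c x))" using bijV(2) by (metis imageE)
          have "L (vadd v (vscale c x)) = y"
            using E[OF v(1), of c] v(2) cd ud(2) by (simp add: vec_defs fun_eq_iff)
          moreover have "vadd v (vscale c x) \<in> Vx" using ext_mem[OF v(1)] unfolding Vx_def by blast
          ultimately show "y \<in> L ` Vx" by (metis image_eqI)
        qed
      qed
      ultimately show "bij_betw (\<lambda>w. vsub (S w) (vscale l w)) Vx Vx"
        unfolding L_def bij_betw_def by simp
    qed
  qed
  show ?thesis unfolding fd_spectrum_def using key unfolding Vx_def by auto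
qed

lemma x_in_fspan: "x \<in> fspan {x}"
  by (rule fspan_base) auto

lemma fspan_single_mem: "vscale c x \<in> fspan {x}"
  using fspan_single by blast

lemma block_spec:
  assumes lin: "lin_op D T" and hp: "has_proj V" and VD: "V \<subseteq> D"
    and xl: "x \<in> l2" and xo: "\<forall>u\<in>V. l2inner x u = 0" and xx: "l2inner x x = 1"
    and bf: "block_form T V x \<mu> A"
  shows "fd_spectrum (ext_span V x) (compress T (ext_span V x)) = fd_spectrum V (compress T V) \<union> {\<mu>}"
proof (rule spectrum_block)
  show cV: "closed_sub V" and Vl: "V \<subseteq> l2" using hp by (auto simp: has_proj_def)
  show "x \<in> l2" "\<forall>u\<in>V. l2inner x u = 0" "l2inner x x = 1" by fact+
  show "\<forall>v\<in>V. compress T V v \<in> V"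
    using VD lin proj_props[OF hp] unfolding compress_def lin_op_def by blast
  show "\<forall>c. A (vscale c x) \<in> V" using bf fspan_single_mem unfolding block_form_def by blast
  have "A (vscale 0 x) = vscale 0 (A x)" using bf x_in_fspan unfolding block_form_def by blast
  thus "A (vscale 0 x) = vzero" by (simp add: vec_defs)
  show "\<forall>v\<in>V. \<forall>c. compress T (ext_span V x) (vadd v (vscale c x)) =
     vadd (vadd (compress T V v) (A (vscale c x))) (vscale \<mu> (vscale c x))"
    using bf fspan_single_mem unfolding block_form_def by blast
qed

lemma proj_ext:
  assumes hp: "has_proj V" and xl: "x \<in> l2" and xo: "\<forall>u\<in>V. l2inner x u = 0" and xx: "l2inner x x = 1"
    and yl: "y \<in> l2"
  shows "proj (ext_span V x) y = vadd (proj V y) (vscale (l2inner y x) x)"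
proof (rule proj_unique)
  have cV: "closed_sub V" and Vl: "V \<subseteq> l2" using hp by (auto simp: has_proj_def)
  show "closed_sub (ext_span V x)" unfolding closed_sub_def
  proof (intro conjI ballI allI)
    show "vzero \<in> ext_span V x" using ext_mem[of vzero V 0 x] cV by (simp add: closed_sub_def vec_defs)
  next
    fix a b assume "a \<in> ext_span V x" "b \<in> ext_span V x"
    then obtain v c v' c' where "v \<in> V" "v' \<in> V" "a = vadd v (vscale c x)" "b = vadd v' (vscale c' x)"
      unfolding ext_span_def by blast
    moreover hence "vadd a b = vadd (vadd v v') (vscale (c + c') x)" by (simp add: vec_defs fun_eq_iff algebra_simps)
    moreover have "vadd v v' \<in> V" using cV calculation by (simp add: closed_sub_def)
    ultimately show "vadd a b \<in> ext_span V x" using ext_mem by metis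
  next
    fix k a assume "a \<in> ext_span V x"
    then obtain v c where "v \<in> V" "a = vadd v (vscale c x)" unfolding ext_span_def by blast
    moreover hence "vscale k a = vadd (vscale k v) (vscale (k * c) x)" by (simp add: vec_defs fun_eq_iff algebra_simps)
    moreover have "vscale k v \<in> V" using cV calculation by (simp add: closed_sub_def)
    ultimately show "vscale k a \<in> ext_span V x" using ext_mem by metis
  qed
  show "ext_span V x \<subseteq> l2"
    unfolding ext_span_def using Vl xl by (auto intro!: l2_vadd l2_vscale)
  show "y \<in> l2" by fact
  have P: "proj V y \<in> V" "\<forall>u\<in>V. l2inner (vsub y (proj V y)) u = 0" using proj_props[OF hp yl] by auto
  have Pl: "proj V y \<in> l2" using P Vl by auto
  show "vadd (proj V y) (vscale (l2inner y x) x) \<in> ext_span V x" using ext_mem[OF P(1)] .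
  show "\<forall>u\<in>ext_span V x. l2inner (vsub y (vadd (proj V y) (vscale (l2inner y x) x))) u = 0"
  proof
    fix u assume "u \<in> ext_span V x"
    then obtain v c where vc: "v \<in> V" "u = vadd v (vscale c x)" unfolding ext_span_def by blast
    have vl: "v \<in> l2" using vc Vl by auto
    define r where "r = vsub y (vadd (proj V y) (vscale (l2inner y x) x))"
    have req: "r = vsub (vsub y (proj V y)) (vscale (l2inner y x) x)" unfolding r_def by (simp add: vec_defs fun_eq_iff)
    have rl: "r \<in> l2" unfolding req using yl Pl xl by (simp add: l2_vsub l2_vscale)
    have "l2inner r v = l2inner (vsub y (proj V y)) v - l2inner y x * l2inner x v"
      unfolding req using yl Pl xl vl by (simp add: ip_sub_left ip_scale_left l2_vsub l2_vscale)
    hence rv: "l2inner r v = 0" using P(2) xo vc(1) by simp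
    have "l2inner (proj V y) x = 0" using ip_cnj[OF xl Pl] xo P(1) by simp
    hence "l2inner r x = l2inner y x - 0 - l2inner y x * 1"
      unfolding req using yl Pl xl xx by (simp add: ip_sub_left ip_scale_left l2_vsub l2_vscale)
    hence rx: "l2inner r x = 0" by simp
    have "l2inner r u = l2inner r v + cnj c * l2inner r x"
      unfolding vc(2) using rl vl xl by (simp add: ip_add_right ip_scale_right l2_vscale)
    thus "l2inner r u = 0" using rv rx by simp
  qed
qed

lemma block_main:
  assumes lin: "lin_op D T" and hp: "has_proj V" and VD: "V \<subseteq> D"
    and xD: "x \<in> D" and xo: "\<forall>u\<in>V. l2inner x u = 0" and xx: "l2inner x x = 1"
    and xTV: "\<forall>v\<in>V. l2inner x (T v) = 0"
  shows "block_form T V x (l2inner (T x) x) (\<lambda>y. proj V (T y))"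
proof -
  have DD: "lin_subspace D" and Tl: "\<forall>v\<in>D. T v \<in> l2"
    and Tadd: "\<forall>a\<in>D. \<forall>b\<in>D. T (vadd a b) = vadd (T a) (T b)"
    and Tsc: "\<forall>c. \<forall>a\<in>D. T (vscale c a) = vscale c (T a)" using lin unfolding lin_op_def by auto
  have Dl: "D \<subseteq> l2" using DD unfolding lin_subspace_def by auto
  have xl: "x \<in> l2" using xD Dl by auto
  have Vl: "V \<subseteq> l2" using hp by (auto simp: has_proj_def)
  have yD: "y \<in> D" if "y \<in> fspan {x}" for y
    using that xD DD unfolding fspan_single lin_subspace_def by blast
  let ?A = "\<lambda>y. proj V (T y)"
  show ?thesis unfolding block_form_def
  proof (intro conjI ballI allI)
    fix y assume "y \<in> fspan {x}"
    thus "?A y \<in> V" using proj_props[OF hp] yD Tl by blast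
  next
    fix y z assume "y \<in> fspan {x}" "z \<in> fspan {x}"
    thus "?A (vadd y z) = vadd (?A y) (?A z)" using yD Tl Tadd proj_add[OF hp] by simp
  next
    fix c y assume "y \<in> fspan {x}"
    thus "?A (vscale c y) = vscale c (?A y)" using yD Tl Tsc proj_scale[OF hp] by simp
  next
    fix v y assume v: "v \<in> V" and y: "y \<in> fspan {x}"
    then obtain c where yc: "y = vscale c x" using fspan_single by blast
    have vD: "v \<in> D" using v VD by auto
    have Tvl: "T v \<in> l2" and Tyl: "T y \<in> l2" and Txl: "T x \<in> l2" using Tl vD yD[OF y] xD by auto
    have Ty: "T y = vscale c (T x)" using Tsc xD yc by simp
    have "compress T (ext_span V x) (vadd v y) = proj (ext_span V x) (vadd (T v) (T y))"
      unfolding compress_def using Tadd vD yD[OF y] by simp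
    also have "\<dots> = vadd (proj V (vadd (T v) (T y))) (vscale (l2inner (vadd (T v) (T y)) x) x)"
      using proj_ext[OF hp xl xo xx] Tvl Tyl l2_vadd by blast
    also have "l2inner (vadd (T v) (T y)) x = c * l2inner (T x) x"
    proof -
      have "l2inner (T v) x = 0" using ip_cnj[OF xl Tvl] xTV v by simp
      thus ?thesis using Tvl Tyl Txl xl Ty by (simp add: ip_add_left ip_scale_left)
    qed
    also have "proj V (vadd (T v) (T y)) = vadd (proj V (T v)) (proj V (T y))"
      using proj_add[OF hp Tvl Tyl] .
    finally show "compress T (ext_span V x) (vadd v y) =
        vadd (vadd (compress T V v) (?A y)) (vscale (l2inner (T x) x) y)"
      unfolding compress_def yc by (simp add: vec_defs fun_eq_iff algebra_simps)
  qed
qed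

lemma block_change_A:
  assumes "block_form T V x \<mu> A" "\<forall>y\<in>fspan {x}. A y = A' y"
  shows "block_form T V x \<mu> A'"
proof -
  have c: "vadd y z \<in> fspan {x}" "vscale k y \<in> fspan {x}" if "y \<in> fspan {x}" "z \<in> fspan {x}" for y z k
    using closed_sub_fspan[of "{x}"] that unfolding closed_sub_def by auto
  show ?thesis using assms unfolding block_form_def
  proof (intro conjI ballI allI)
    show "\<And>y. y \<in> fspan {x} \<Longrightarrow> A' y \<in> V" using assms unfolding block_form_def by auto
    show "\<And>y z. y \<in> fspan {x} \<Longrightarrow> z \<in> fspan {x} \<Longrightarrow> A' (vadd y z) = vadd (A' y) (A' z)"
      using assms c(1) unfolding block_form_def by metis
    show "\<And>k y. y \<in> fspan {x} \<Longrightarrow> A' (vscale k y) = vscale k (A' y)"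
      using assms c(2) unfolding block_form_def by (metis x_in_fspan)
    show "\<And>v y. v \<in> V \<Longrightarrow> y \<in> fspan {x} \<Longrightarrow> compress T (ext_span V x) (vadd v y) =
        vadd (vadd (compress T V v) (A' y)) (vscale \<mu> y)"
      using assms unfolding block_form_def by metis
  qed
qed

lemma closed_sub_orth: "U \<subseteq> l2 \<Longrightarrow> closed_sub (orth U)"
  unfolding closed_sub_def orth_def
  by (auto simp: l2_vzero l2_vadd l2_vscale ip_zero_left ip_add_left ip_scale_left subset_iff)

lemma closed_sub_Int: "closed_sub A \<Longrightarrow> closed_sub B \<Longrightarrow> closed_sub (A \<inter> B)"
  unfolding closed_sub_def by auto

lemma ip_expand:
  assumes "p \<in> l2" "q \<in> l2" "x \<in> l2" "y \<in> l2"
  shows "l2inner (vadd (vscale \<alpha> p) (vscale \<beta> q)) (vadd (vscale \<gamma> x) (vscale \<delta> y)) =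
     \<alpha> * cnj \<gamma> * l2inner p x + \<alpha> * cnj \<delta> * l2inner p y + \<beta> * cnj \<gamma> * l2inner q x + \<beta> * cnj \<delta> * l2inner q y"
  using assms by (simp add: ip_add_left ip_add_right ip_scale_left ip_scale_right l2_vscale l2_vadd algebra_simps)

lemma omega_exists: "\<exists>\<omega>. cnj \<omega> * \<omega> = 1 \<and> Im (cnj \<omega> * p + \<omega> * p') = 0"
proof -
  define d where "d = p - cnj p'"
  define \<omega> where "\<omega> = (if d = 0 then 1 else d / of_real (cmod d))"
  have dd: "cnj d * d = (of_real (cmod d))\<^sup>2"
    using complex_norm_square[of d] by (simp add: mult.commute)
  have 1: "cnj \<omega> * \<omega> = 1"
  proof (cases "d = 0")
    case False
    hence "cnj \<omega> * \<omega> = (cnj d * d) / (of_real (cmod d))\<^sup>2" unfolding \<omega>_def by (simp add: power2_eq_square)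
    also have "\<dots> = 1" using False by (simp add: dd)
    finally show ?thesis .
  qed (simp add: \<omega>_def)
  have "Im (cnj \<omega> * d) = 0"
  proof (cases "d = 0")
    case False
    hence "cnj \<omega> * d = (cnj d * d) / of_real (cmod d)" unfolding \<omega>_def by simp
    also have "\<dots> = of_real ((cmod d)\<^sup>2 / cmod d)" by (simp add: dd)
    finally show ?thesis by simp
  qed simp
  moreover have "Im (cnj \<omega> * p + \<omega> * p') = Im (cnj \<omega> * d)"
    unfolding d_def by (simp add: algebra_simps)
  ultimately show ?thesis using 1 by auto
qed

lemma l2norm_nonneg: "x \<in> l2 \<Longrightarrow> l2norm x \<ge> 0"
  unfolding l2norm_def l2_def by (auto intro!: suminf_nonneg)

lemma numrange_convex:
  assumes lin: "lin_op D T" and cM: "closed_sub M" and MD: "M \<subseteq> D"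
  shows "convex (numrange T M)"
  unfolding convex_def
proof (intro ballI allI impI)
  fix u1 u2 and r1 r2 :: real
  assume u1: "u1 \<in> numrange T M" and u2: "u2 \<in> numrange T M" and r: "0 \<le> r1" "0 \<le> r2" "r1 + r2 = 1"
  have DD: "lin_subspace D" and Tl: "\<forall>v\<in>D. T v \<in> l2"
    and Tadd: "\<forall>a\<in>D. \<forall>b\<in>D. T (vadd a b) = vadd (T a) (T b)"
    and Tsc: "\<forall>c. \<forall>a\<in>D. T (vscale c a) = vscale c (T a)" using lin unfolding lin_op_def by auto
  have Dl: "D \<subseteq> l2" using DD unfolding lin_subspace_def by auto
  obtain x where x: "x \<in> M" "l2norm x = 1" "u1 = l2inner (T x) x" using u1 unfolding numrange_def by blast
  obtain y where y: "y \<in> M" "l2norm y = 1" "u2 = l2inner (T y) y" using u2 unfolding numrange_def by blast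
  have xD: "x \<in> D" and yD: "y \<in> D" using x y MD by auto
  have xl: "x \<in> l2" and yl: "y \<in> l2" using xD yD Dl by auto
  have Txl: "T x \<in> l2" and Tyl: "T y \<in> l2" using Tl xD yD by auto
  have xx: "l2inner x x = 1" and yy: "l2inner y y = 1" using ip_unit xl yl x(2) y(2) by auto
  define a where "a = l2inner (T x) x"
  define b where "b = l2inner (T y) y"
  have r1: "r1 = 1 - r2" using r by simp
  show "r1 *\<^sub>R u1 + r2 *\<^sub>R u2 \<in> numrange T M"
  proof (cases "a = b")
    case True
    have "r1 *\<^sub>R u1 + r2 *\<^sub>R u2 = (r1 + r2) *\<^sub>R a" using True x(3) y(3) unfolding a_def b_def
      by (simp add: scaleR_left_distrib)
    also have "\<dots> = u1" using r x(3) unfolding a_def by simp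
    finally show ?thesis using u1 by simp
  next
    case False
    hence ba: "b - a \<noteq> 0" by simp
    define P where "P = l2inner (T x) y"
    define P' where "P' = l2inner (T y) x"
    define G where "G = l2inner x y"
    define G' where "G' = l2inner y x"
    have GG: "G' = cnj G" unfolding G_def G'_def using ip_cnj[OF xl yl] .
    define p where "p = (P - a * G) / (b - a)"
    define p' where "p' = (P' - a * G') / (b - a)"
    obtain \<omega> where om: "cnj \<omega> * \<omega> = 1" "Im (cnj \<omega> * p + \<omega> * p') = 0" using omega_exists by blast
    define k where "k = Re (cnj \<omega> * p + \<omega> * p')"
    have kk: "cnj \<omega> * p + \<omega> * p' = of_real k" unfolding k_def using om(2) by (simp add: complex_eq_iff)
    define hh where "hh = Re (cnj \<omega> * G + \<omega> * G')"
    have "Im (cnj \<omega> * G + \<omega> * G') = 0" unfolding GG by simp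
    hence hh: "cnj \<omega> * G + \<omega> * G' = of_real hh" unfolding hh_def by (simp add: complex_eq_iff)
    define z where "z t = vadd (vscale (of_real (1 - t)) x) (vscale (of_real t * \<omega>) y)" for t :: real
    define n where "n t = (1 - t)\<^sup>2 + t * (1 - t) * hh + t\<^sup>2" for t :: real
    define g where "g t = t\<^sup>2 + t * (1 - t) * k" for t :: real
    have zM: "z t \<in> M" for t using cM x(1) y(1) unfolding z_def closed_sub_def by blast
    have zl: "z t \<in> l2" for t using zM MD Dl by blast
    have Tz: "T (z t) = vadd (vscale (of_real (1 - t)) (T x)) (vscale (of_real t * \<omega>) (T y))" for t
    proof -
      have "vscale (of_real (1 - t)) x \<in> D" "vscale (of_real t * \<omega>) y \<in> D"
        using DD xD yD unfolding lin_subspace_def by auto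
      thus ?thesis unfolding z_def using Tadd Tsc xD yD by simp
    qed
    have N: "l2inner (z t) (z t) = of_real (n t)" for t
    proof -
      have "l2inner (z t) (z t) = of_real ((1 - t)\<^sup>2) + of_real (t * (1 - t)) * (cnj \<omega> * G + \<omega> * G')
          + of_real (t\<^sup>2) * (cnj \<omega> * \<omega>)"
        unfolding z_def G_def G'_def using xl yl xx yy
        by (simp add: ip_expand algebra_simps power2_eq_square)
      also have "\<dots> = of_real (n t)" unfolding hh om(1) n_def by simp
      finally show ?thesis .
    qed
    have Q: "l2inner (T (z t)) (z t) = a * of_real (n t) + (b - a) * of_real (g t)" for t
    proof -
      have e1: "l2inner (T (z t)) (z t) = of_real ((1 - t)\<^sup>2) * a + of_real (t * (1 - t)) * (cnj \<omega> * P + \<omega> * P')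
          + of_real (t\<^sup>2) * (cnj \<omega> * \<omega>) * b"
        unfolding Tz unfolding z_def P_def P'_def a_def b_def using xl yl Txl Tyl
        by (simp add: ip_expand algebra_simps power2_eq_square)
      have hp: "(b - a) * p = P - a * G" unfolding p_def using ba by simp
      have hp': "(b - a) * p' = P' - a * G'" unfolding p'_def using ba by simp
      have "(b - a) * of_real k = cnj \<omega> * ((b - a) * p) + \<omega> * ((b - a) * p')"
        unfolding kk[symmetric] by (simp add: algebra_simps)
      hence e2: "(b - a) * of_real k = cnj \<omega> * (P - a * G) + \<omega> * (P' - a * G')"
        unfolding hp hp' .
      have "a * of_real (n t) + (b - a) * of_real (g t) =
          a * (of_real ((1 - t)\<^sup>2) + of_real (t * (1 - t)) * (cnj \<omega> * G + \<omega> * G') + of_real (t\<^sup>2))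
          + (b - a) * of_real (t\<^sup>2) + of_real (t * (1 - t)) * ((b - a) * of_real k)"
        unfolding n_def g_def hh by (simp add: algebra_simps)
      also have "\<dots> = l2inner (T (z t)) (z t)" unfolding e1 e2 om(1) by (simp add: algebra_simps)
      finally show ?thesis by simp
    qed
    have nz: "z t \<noteq> vzero" if t: "0 \<le> t" "t \<le> 1" for t
    proof
      assume z0: "z t = vzero"
      define u where "u = vscale (of_real (1 - t)) x"
      define \<beta> where "\<beta> = - (complex_of_real t * \<omega>)"
      have "\<forall>n. complex_of_real (1 - t) * x n + complex_of_real t * \<omega> * y n = 0"
        using z0 unfolding z_def vadd_def vscale_def vzero_def by (simp add: fun_eq_iff)
      hence "\<forall>n. complex_of_real (1 - t) * x n = \<beta> * y n"
        unfolding \<beta>_def by (simp add: eq_neg_iff_add_eq_0)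
      hence u2: "u = vscale \<beta> y" unfolding u_def vscale_def by (simp add: fun_eq_iff)
      have bb: "\<beta> * cnj \<beta> = of_real (t\<^sup>2)"
      proof -
        have "\<beta> * cnj \<beta> = of_real t * of_real t * (cnj \<omega> * \<omega>)" unfolding \<beta>_def by (simp add: algebra_simps)
        thus ?thesis unfolding om(1) by (simp add: power2_eq_square)
      qed
      hence bb: "cnj \<beta> * \<beta> = of_real (t\<^sup>2)" by (simp add: mult.commute)
      have aa: "cnj (complex_of_real (1 - t)) * complex_of_real (1 - t) = of_real ((1 - t)\<^sup>2)"
        by (simp add: power2_eq_square)
      have "l2inner u u = of_real ((1 - t)\<^sup>2)" unfolding u_def using xl xx
        by (simp only: ip_scale_left ip_scale_right l2_vscale mult.assoc[symmetric] aa mult_1_right)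
      moreover have "l2inner u u = of_real (t\<^sup>2)" unfolding u2 using yl yy
        by (simp only: ip_scale_left ip_scale_right l2_vscale mult.assoc[symmetric] bb mult_1_right)
      ultimately have tt: "(1 - t)\<^sup>2 = t\<^sup>2" by (metis of_real_eq_iff)
      hence th: "t = 1/2" by (simp add: power2_eq_square algebra_simps)
      have Tu1: "T u = vscale (of_real (1 - t)) (T x)" unfolding u_def using Tsc xD by blast
      have Tu2: "T u = vscale \<beta> (T y)" unfolding u2 using Tsc yD by blast
      have "l2inner (T u) u = l2inner (vscale (of_real (1 - t)) (T x)) (vscale (of_real (1 - t)) x)"
        unfolding Tu1 by (simp add: u_def)
      also have "\<dots> = of_real ((1 - t)\<^sup>2) * a" unfolding a_def
        using xl Txl by (simp only: ip_scale_left ip_scale_right l2_vscale mult.assoc[symmetric] aa)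
      finally have ua: "l2inner (T u) u = of_real ((1 - t)\<^sup>2) * a" .
      have "l2inner (T u) u = l2inner (vscale \<beta> (T y)) (vscale \<beta> y)"
        unfolding Tu2 by (simp add: u2)
      also have "\<dots> = of_real (t\<^sup>2) * b" unfolding b_def
        using yl Tyl by (simp only: ip_scale_left ip_scale_right l2_vscale mult.assoc[symmetric] bb)
      finally have ub: "l2inner (T u) u = of_real (t\<^sup>2) * b" .
      have "of_real ((1 - t)\<^sup>2) * a = of_real ((1 - t)\<^sup>2) * b" using ua ub tt by metis
      moreover have "complex_of_real ((1 - t)\<^sup>2) \<noteq> 0" using th by simp
      ultimately show False using False by simp
    qed
    have npos: "n t > 0" if "0 \<le> t" "t \<le> 1" for t
    proof -
      have "of_real (n t) = l2inner (z t) (z t)" using N by simp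
      also have "\<dots> = of_real ((l2norm (z t))\<^sup>2)" by (rule ip_self_norm[OF zl])
      finally have "n t = (l2norm (z t))\<^sup>2" by (metis of_real_eq_iff)
      moreover have "n t \<noteq> 0" using N[of t] nz[OF that] ip_self_zero[OF zl] by force
      ultimately show ?thesis by simp
    qed
    have nne: "\<forall>t\<in>{0..1}. n t \<noteq> 0" using npos by force
    have cg: "continuous_on {0..1} g" unfolding g_def by (intro continuous_intros)
    have cn: "continuous_on {0..1} n" unfolding n_def by (intro continuous_intros)
    have cont: "continuous_on {0..1} (\<lambda>t. g t / n t)" using cg cn nne by (rule continuous_on_divide)
    have f0: "g 0 / n 0 = 0" unfolding g_def by simp
    have f1: "g 1 / n 1 = 1" unfolding g_def n_def by simp
    have r21: "r2 \<le> 1" using r by simp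
    obtain t where t: "0 \<le> t" "t \<le> 1" "g t / n t = r2"
      using IVT'[of "\<lambda>t. g t / n t" 0 r2 1, OF _ _ _ cont] r(2) r21 unfolding f0 f1 by auto
    define c where "c = 1 / sqrt (n t)"
    have nt: "n t > 0" using npos t by auto
    have cc: "c * c = 1 / n t" unfolding c_def using nt by (simp add: real_sqrt_mult[symmetric])
    have ccc: "cnj (complex_of_real c) * complex_of_real c = of_real (1 / n t)"
      by (simp add: cc[symmetric])
    define w where "w = vscale (of_real c) (z t)"
    have wM: "w \<in> M" using cM zM unfolding w_def closed_sub_def by blast
    have wl: "w \<in> l2" using wM MD Dl by blast
    have "l2inner w w = of_real (1 / n t) * of_real (n t)" unfolding w_def using zl[of t] N[of t]
      by (simp only: ip_scale_left ip_scale_right l2_vscale mult.assoc[symmetric] ccc)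
    hence "l2inner w w = 1" using nt by simp
    hence "of_real ((l2norm w)\<^sup>2) = (1::complex)" using ip_self_norm[OF wl] by simp
    hence "(l2norm w)\<^sup>2 = 1" by (metis of_real_eq_1_iff)
    moreover have "l2norm w \<ge> 0" using l2norm_nonneg wl by blast
    ultimately have wn: "l2norm w = 1" using power2_eq_1_iff by force
    have Tw: "T w = vscale (of_real c) (T (z t))" unfolding w_def using Tsc zM MD by blast
    have Tzl: "T (z t) \<in> l2" using Tl zM MD by blast
    have "l2inner (T w) w = l2inner (vscale (of_real c) (T (z t))) (vscale (of_real c) (z t))"
      unfolding Tw by (simp add: w_def)
    also have "\<dots> = of_real (1 / n t) * l2inner (T (z t)) (z t)"
      using zl[of t] Tzl
      by (simp only: ip_scale_left ip_scale_right l2_vscale mult.assoc[symmetric] ccc)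
    also have "\<dots> = of_real (1 / n t) * (a * of_real (n t) + (b - a) * of_real (g t))" unfolding Q ..
    also have "\<dots> = a + (b - a) * of_real (g t / n t)"
    proof -
      have nN: "complex_of_real (n t) \<noteq> 0" using nt by simp
      show ?thesis using nN by (simp add: field_simps)
    qed
    also have "\<dots> = r1 *\<^sub>R u1 + r2 *\<^sub>R u2" unfolding t(3) r1 x(3) y(3) a_def b_def
      by (simp add: scaleR_conv_of_real algebra_simps)
    finally have eqw: "r1 *\<^sub>R u1 + r2 *\<^sub>R u2 = l2inner (T w) w" by simp
    show ?thesis unfolding numrange_def using wM wn eqw by blast
  qed
qed

lemma pick:
  assumes lin: "lin_op D T" and B: "finite B" "B \<subseteq> l2" and VD: "fspan B \<subseteq> D"
    and B': "finite B'" "B' \<subseteq> l2" "B \<union> T ` B \<subseteq> B'"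
    and x: "x \<in> orth (fspan B') \<inter> D" "l2norm x = 1"
  shows "x \<in> orth (fspan B) \<inter> D \<and> l2norm x = 1 \<and>
     block_form T (fspan B) x (l2inner (T x) x) (\<lambda>y. proj (fspan B) (T y)) \<and>
     fd_spectrum (ext_span (fspan B) x) (compress T (ext_span (fspan B) x))
       = fd_spectrum (fspan B) (compress T (fspan B)) \<union> {l2inner (T x) x} \<and>
     ((\<forall>b\<in>B. l2inner (T x) b = 0) \<longrightarrow>
       block_form T (fspan B) x (l2inner (T x) x) (\<lambda>y. vzero) \<and>
     fd_spectrum (ext_span (fspan B) x) (compress T (ext_span (fspan B) x))
       = fd_spectrum (fspan B) (compress T (fspan B)) \<union> {l2inner (T x) x})"
proof -
  let ?V = "fspan B"
  have DD: "lin_subspace D" and Tl: "\<forall>v\<in>D. T v \<in> l2"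
    and Tadd: "\<forall>a\<in>D. \<forall>b\<in>D. T (vadd a b) = vadd (T a) (T b)"
    and Tsc: "\<forall>c. \<forall>a\<in>D. T (vscale c a) = vscale c (T a)" using lin unfolding lin_op_def by auto
  have hp: "has_proj ?V" using has_proj_fspan B by blast
  have Vl: "?V \<subseteq> l2" using hp by (auto simp: has_proj_def)
  have xl: "x \<in> l2" and xD: "x \<in> D" using x unfolding orth_def by auto
  have xx: "l2inner x x = 1" using ip_unit xl x(2) by blast
  have sub: "?V \<subseteq> fspan B'" using fspan_mono B' by blast
  have xo': "\<forall>u\<in>fspan B'. l2inner x u = 0" using x unfolding orth_def by auto
  hence xo: "\<forall>u\<in>?V. l2inner x u = 0" using sub by blast
  have TV: "\<forall>v\<in>?V. T v \<in> fspan (T ` B)"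
  proof -
    have "closed_sub {v \<in> D. T v \<in> fspan (T ` B)}" unfolding closed_sub_def
    proof (intro conjI ballI allI)
      have z: "vzero \<in> D" using DD unfolding lin_subspace_def by auto
      have "T vzero = T (vscale 0 vzero)" by (simp add: vec_defs)
      also have "\<dots> = vscale 0 (T vzero)" using Tsc z by blast
      also have "\<dots> = vzero" by (simp add: vec_defs)
      finally show "vzero \<in> {v \<in> D. T v \<in> fspan (T ` B)}"
        using z closed_sub_fspan[of "T ` B"] by (simp add: closed_sub_def)
    next
      fix a b assume "a \<in> {v \<in> D. T v \<in> fspan (T ` B)}" "b \<in> {v \<in> D. T v \<in> fspan (T ` B)}"
      thus "vadd a b \<in> {v \<in> D. T v \<in> fspan (T ` B)}"
        using DD Tadd closed_sub_fspan[of "T ` B"] unfolding lin_subspace_def closed_sub_def by auto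
    next
      fix c a assume "a \<in> {v \<in> D. T v \<in> fspan (T ` B)}"
      thus "vscale c a \<in> {v \<in> D. T v \<in> fspan (T ` B)}"
        using DD Tsc closed_sub_fspan[of "T ` B"] unfolding lin_subspace_def closed_sub_def by auto
    qed
    moreover have "B \<subseteq> {v \<in> D. T v \<in> fspan (T ` B)}"
      using VD fspan_base[OF B(1)] fspan_base[of "T ` B"] B(1) by blast
    ultimately show ?thesis using fspan_least[OF B(1)] by blast
  qed
  have "fspan (T ` B) \<subseteq> fspan B'" using fspan_mono B' by blast
  hence xTV: "\<forall>v\<in>?V. l2inner x (T v) = 0" using TV xo' by blast
  have bf: "block_form T ?V x (l2inner (T x) x) (\<lambda>y. proj ?V (T y))"
    using block_main[OF lin hp VD xD xo xx xTV] .
  have sp: "fd_spectrum (ext_span ?V x) (compress T (ext_span ?V x))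
       = fd_spectrum ?V (compress T ?V) \<union> {l2inner (T x) x}"
    using block_spec[OF lin hp VD xl xo xx bf] .
  have xoV: "x \<in> orth ?V" using xo xl unfolding orth_def by blast
  have second: "block_form T ?V x (l2inner (T x) x) (\<lambda>y. vzero)" if h: "\<forall>b\<in>B. l2inner (T x) b = 0"
  proof (rule block_change_A[OF bf], rule ballI)
    fix y assume "y \<in> fspan {x}"
    then obtain c where yc: "y = vscale c x" using fspan_single by blast
    have Txl: "T x \<in> l2" using Tl xD by blast
    have "closed_sub {u \<in> l2. l2inner (T x) u = 0}"
      unfolding closed_sub_def using Txl
      by (auto simp: l2_vzero l2_vadd l2_vscale ip_zero_right ip_add_right ip_scale_right)
    moreover have "B \<subseteq> {u \<in> l2. l2inner (T x) u = 0}" using h B(2) by blast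
    ultimately have TxV: "\<forall>u\<in>?V. l2inner (T x) u = 0" using fspan_least[OF B(1)] by blast
    have Ty: "T y = vscale c (T x)" using Tsc xD yc by simp
    show "proj ?V (T y) = vzero"
    proof (rule proj_unique)
      show "closed_sub ?V" "?V \<subseteq> l2" using hp by (auto simp: has_proj_def)
      show "T y \<in> l2" using Ty Txl l2_vscale by simp
      show "vzero \<in> ?V" using closed_sub_fspan by (simp add: closed_sub_def)
      have "vsub (T y) vzero = vscale c (T x)" using Ty by (simp add: vec_defs)
      thus "\<forall>u\<in>?V. l2inner (vsub (T y) vzero) u = 0"
        using TxV Txl Vl by (simp add: ip_scale_left subset_iff)
    qed
  qed
  show ?thesis using bf sp xoV xD x(2) second by blast
qed

theorem lemma6p6:
  fixes D :: "vec set" and T :: "vec \<Rightarrow> vec" and V :: "vec set"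
    and lam :: complex and \<epsilon> :: real
  assumes "lin_op D T"
    and "fin_dim_subspace V" and "V \<subseteq> D"
    and "lam \<in> We1 D T" and "\<epsilon> > 0"
  shows "(\<exists>x \<mu> A. x \<in> orth V \<inter> D \<and> l2norm x = 1 \<and> cmod (\<mu> - lam) < \<epsilon> \<and>
            block_form T V x \<mu> A \<and>
            fd_spectrum (ext_span V x) (compress T (ext_span V x))
              = fd_spectrum V (compress T V) \<union> {\<mu>})
     \<and> (dense_in_H D \<and> D \<subseteq> adj_dom D T \<longrightarrow>
         (\<exists>x \<mu>. x \<in> orth V \<inter> D \<and> l2norm x = 1 \<and> cmod (\<mu> - lam) < \<epsilon> \<and>
            block_form T V x \<mu> (\<lambda>y. vzero) \<and>
            fd_spectrum (ext_span V x) (compress T (ext_span V x))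
              = fd_spectrum V (compress T V) \<union> {\<mu>}))
     \<and> (lam \<in> interior (We1 D T) \<longrightarrow>
         (\<exists>x A. x \<in> orth V \<inter> D \<and> l2norm x = 1 \<and>
            block_form T V x lam A \<and>
            fd_spectrum (ext_span V x) (compress T (ext_span V x))
              = fd_spectrum V (compress T V) \<union> {lam}))"
proof -
  note lin = assms(1)
  obtain B where B: "finite B" "B \<subseteq> l2" "V = fspan B" using assms(2) unfolding fin_dim_subspace_def by blast
  have VD: "fspan B \<subseteq> D" using assms(3) B by simp
  have Tl: "\<forall>v\<in>D. T v \<in> l2" using lin unfolding lin_op_def by auto
  have BD: "B \<subseteq> D" using VD fspan_base[OF B(1)] by blast
  have TBl: "T ` B \<subseteq> l2" using BD Tl by blast
  have closeU: "\<exists>x. x \<in> orth (fspan B') \<inter> D \<and> l2norm x = 1 \<and> cmod (l2inner (T x) x - lam) < \<epsilon>"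
    if "finite B'" "B' \<subseteq> l2" for B'
  proof -
    have "fin_dim_subspace (fspan B')" unfolding fin_dim_subspace_def using that by blast
    hence "lam \<in> closure (numrange T (orth (fspan B') \<inter> D))" using assms(4) unfolding We1_def by blast
    then obtain q where "q \<in> numrange T (orth (fspan B') \<inter> D)" "dist q lam < \<epsilon>"
      using closure_approachable assms(5) by blast
    thus ?thesis unfolding numrange_def dist_complex_def by blast
  qed
  let ?B1 = "B \<union> T ` B"
  have B1: "finite ?B1" "?B1 \<subseteq> l2" using B TBl by auto
  have part1: "\<exists>x \<mu> A. x \<in> orth V \<inter> D \<and> l2norm x = 1 \<and> cmod (\<mu> - lam) < \<epsilon> \<and>
            block_form T V x \<mu> A \<and>
            fd_spectrum (ext_span V x) (compress T (ext_span V x))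
              = fd_spectrum V (compress T V) \<union> {\<mu>}"
  proof -
    obtain x where x: "x \<in> orth (fspan ?B1) \<inter> D" "l2norm x = 1" "cmod (l2inner (T x) x - lam) < \<epsilon>"
      using closeU[OF B1] by blast
    show ?thesis using pick[OF lin B(1,2) VD B1 _ x(1,2)] x(3) unfolding B(3) by blast
  qed
  have part2: "\<exists>x \<mu>. x \<in> orth V \<inter> D \<and> l2norm x = 1 \<and> cmod (\<mu> - lam) < \<epsilon> \<and>
            block_form T V x \<mu> (\<lambda>y. vzero) \<and>
            fd_spectrum (ext_span V x) (compress T (ext_span V x))
              = fd_spectrum V (compress T V) \<union> {\<mu>}" if adj: "D \<subseteq> adj_dom D T"
  proof -
    have "\<forall>b\<in>B. \<exists>z. z \<in> l2 \<and> (\<forall>y\<in>D. l2inner (T y) b = l2inner y z)"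
      using BD adj unfolding adj_dom_def by blast
    then obtain Z where Z: "\<forall>b\<in>B. Z b \<in> l2 \<and> (\<forall>y\<in>D. l2inner (T y) b = l2inner y (Z b))"
      by metis
    let ?B2 = "?B1 \<union> Z ` B"
    have B2: "finite ?B2" "?B2 \<subseteq> l2" using B1 B(1) Z by auto
    obtain x where x: "x \<in> orth (fspan ?B2) \<inter> D" "l2norm x = 1" "cmod (l2inner (T x) x - lam) < \<epsilon>"
      using closeU[OF B2] by blast
    have "\<forall>b\<in>B. l2inner (T x) b = 0"
    proof
      fix b assume b: "b \<in> B"
      have "Z b \<in> fspan ?B2" using fspan_base[OF B2(1)] b by blast
      hence "l2inner x (Z b) = 0" using x(1) unfolding orth_def by blast
      thus "l2inner (T x) b = 0" using Z b x(1) by simp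
    qed
    thus ?thesis using pick[OF lin B(1,2) VD B2(1,2) _ x(1,2)] x(3) unfolding B(3) by blast
  qed
  have part3: "\<exists>x A. x \<in> orth V \<inter> D \<and> l2norm x = 1 \<and>
            block_form T V x lam A \<and>
            fd_spectrum (ext_span V x) (compress T (ext_span V x))
              = fd_spectrum V (compress T V) \<union> {lam}" if int: "lam \<in> interior (We1 D T)"
  proof -
    let ?M = "orth (fspan ?B1) \<inter> D"
    have fd: "fin_dim_subspace (fspan ?B1)" unfolding fin_dim_subspace_def using B1 by blast
    have "We1 D T \<subseteq> closure (numrange T ?M)" unfolding We1_def using fd by blast
    hence "lam \<in> interior (closure (numrange T ?M))" using int interior_mono by blast
    moreover have "closed_sub ?M"
      using closed_sub_Int closed_sub_orth fspan_l2[OF B1] lin_subspace_closed_sub lin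
      unfolding lin_op_def by blast
    hence "convex (numrange T ?M)" using numrange_convex[OF lin] by blast
    ultimately have "lam \<in> interior (numrange T ?M)" using convex_interior_closure by blast
    hence "lam \<in> numrange T ?M" using interior_subset by blast
    then obtain x where x: "x \<in> ?M" "l2norm x = 1" "lam = l2inner (T x) x" unfolding numrange_def by blast
    show ?thesis using pick[OF lin B(1,2) VD B1 _ x(1,2)] x(3) unfolding B(3) by blast
  qed
  show ?thesis using part1 part2 part3 by blast
qed

end
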